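(* Let $K$ be a field and $S=\langle x_1,\ldots,x_n\rangle$ a right non-degenerate semigroup of skew type, $X=\{x_1,\ldots,x_n\}$. Then: (1) for each integer $i$ with $1\le i\le n$, the set $S_i=\bigcup_{Y\subseteq X,\,|Y|=i}S_Y$ is an ideal of $S$, and $S_X=S_n\subseteq S_{n-1}\subseteq\cdots\subseteq S_1\subseteq S$; (2) $S$ is the union of sets of the form $\{y_1^{a_1}\cdots y_k^{a_k}\mid a_i\ge0\}$, where $y_1,\ldots,y_k\in X$ and $k\le n$. In particular, $\mathrm{GK}(K[S])\le n$.
   Context: A semigroup of skew type is a monoid $S$ with a monoid presentation $S=\langle x_1,\ldots,x_n \mid x_ix_j=x_kx_l\rangle$ consisting of $\binom{n}{2}$ relations, each of the form $x_ix_j=x_kx_l$ with $i\neq j$, $k\neq l$, such that every word $x_px_q$ with $p\neq q$ appears (as one side) in exactly one of the relations. For $a,b\in X$, the partner of $ab$ is the other side of the unique defining relation containing $ab$ if $a\neq b$, and $ab$ itself if $a=b$. $S$ is right non-degenerate if for every $x\in X$ the map $X\to X$ sending $y$ to the first letter of the partner of $xy$ is surjective. For $Y\subseteq X$, $S_Y=\bigcap_{y\in Y}yS$. $\mathrm{GK}$ is Gelfand–Kirillov dimension. *)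

theory Defs
  imports Complex_Main "HOL-Library.Liminf_Limsup" "HOL-Library.Extended_Real"
begin

text \<open>A semigroup (monoid) of skew type on the generating set X is encoded by its
  partner function r: for a, b in X with a different from b, r(a,b) is the other side
  of the unique defining relation containing ab; r(a,a) = (a,a).\<close>

definition skew_type :: "'a set \<Rightarrow> ('a \<times> 'a \<Rightarrow> 'a \<times> 'a) \<Rightarrow> bool" where
  "skew_type X r \<longleftrightarrow> finite X \<and> (\<forall>a\<in>X. r (a,a) = (a,a)) \<and>
     (\<forall>a\<in>X. \<forall>b\<in>X. a \<noteq> b \<longrightarrow>
        fst (r (a,b)) \<in> X \<and> snd (r (a,b)) \<in> X \<and> fst (r (a,b)) \<noteq> snd (r (a,b)) \<and>
        r (a,b) \<noteq> (a,b) \<and> r (r (a,b)) = (a,b))"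

definition right_nondegenerate :: "'a set \<Rightarrow> ('a \<times> 'a \<Rightarrow> 'a \<times> 'a) \<Rightarrow> bool" where
  "right_nondegenerate X r \<longleftrightarrow> (\<forall>x\<in>X. (\<lambda>y. fst (r (x,y))) ` X = X)"

definition one_step :: "'a set \<Rightarrow> ('a \<times> 'a \<Rightarrow> 'a \<times> 'a) \<Rightarrow> ('a list \<times> 'a list) set" where
  "one_step X r = {(u @ [a,b] @ v, u @ [fst (r (a,b)), snd (r (a,b))] @ v) | u v a b.
      u \<in> lists X \<and> v \<in> lists X \<and> a \<in> X \<and> b \<in> X \<and> a \<noteq> b}"

definition word_eq :: "'a set \<Rightarrow> ('a \<times> 'a \<Rightarrow> 'a \<times> 'a) \<Rightarrow> ('a list \<times> 'a list) set" where
  "word_eq X r = (one_step X r \<union> (one_step X r)\<inverse>)\<^sup>*"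

definition cls :: "'a set \<Rightarrow> ('a \<times> 'a \<Rightarrow> 'a \<times> 'a) \<Rightarrow> 'a list \<Rightarrow> 'a list set" where
  "cls X r w = word_eq X r `` {w}"

text \<open>The monoid S = <X | ab = r(a,b)> as the set of congruence classes of words.\<close>
definition mon :: "'a set \<Rightarrow> ('a \<times> 'a \<Rightarrow> 'a \<times> 'a) \<Rightarrow> 'a list set set" where
  "mon X r = cls X r ` lists X"

definition is_ideal :: "'a set \<Rightarrow> ('a \<times> 'a \<Rightarrow> 'a \<times> 'a) \<Rightarrow> 'a list set set \<Rightarrow> bool" where
  "is_ideal X r I \<longleftrightarrow> I \<subseteq> mon X r \<and>
     (\<forall>u\<in>lists X. \<forall>v\<in>lists X. \<forall>w\<in>lists X. cls X r v \<in> I \<longrightarrow> cls X r (u @ v @ w) \<in> I)"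

definition left_mult_set :: "'a set \<Rightarrow> ('a \<times> 'a \<Rightarrow> 'a \<times> 'a) \<Rightarrow> 'a \<Rightarrow> 'a list set set" where
  "left_mult_set X r y = {cls X r (y # w) | w. w \<in> lists X}"

definition S_sub :: "'a set \<Rightarrow> ('a \<times> 'a \<Rightarrow> 'a \<times> 'a) \<Rightarrow> 'a set \<Rightarrow> 'a list set set" where
  "S_sub X r Y = {s \<in> mon X r. \<forall>y\<in>Y. s \<in> left_mult_set X r y}"

definition S_idx :: "'a set \<Rightarrow> ('a \<times> 'a \<Rightarrow> 'a \<times> 'a) \<Rightarrow> nat \<Rightarrow> 'a list set set" where
  "S_idx X r i = \<Union> {S_sub X r Y | Y. Y \<subseteq> X \<and> card Y = i}"

definition power_set_prod :: "'a set \<Rightarrow> ('a \<times> 'a \<Rightarrow> 'a \<times> 'a) \<Rightarrow> 'a list \<Rightarrow> 'a list set set" where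
  "power_set_prod X r ys = {cls X r (concat (map2 replicate as ys)) | as. length as = length ys}"

text \<open>Growth function of S with respect to X: number of elements of word length at most d.
  This equals dim_K V^d for the standard generating subspace V = K + KX of K[S].\<close>
definition growth :: "'a set \<Rightarrow> ('a \<times> 'a \<Rightarrow> 'a \<times> 'a) \<Rightarrow> nat \<Rightarrow> nat" where
  "growth X r d = card {cls X r w | w. w \<in> lists X \<and> length w \<le> d}"

text \<open>Gelfand-Kirillov dimension of the monoid algebra K[S] (independent of the field K):
  limsup of log(dim V^d)/log d.\<close>
definition GK_monoid_algebra :: "'a set \<Rightarrow> ('a \<times> 'a \<Rightarrow> 'a \<times> 'a) \<Rightarrow> ereal" where
  "GK_monoid_algebra X r = limsup (\<lambda>d. ereal (ln (real (growth X r d)) / ln (real d)))"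

end

theory Submission
  imports Defs
begin

definition Yof :: "'a set \<Rightarrow> ('a \<times> 'a \<Rightarrow> 'a \<times> 'a) \<Rightarrow> 'a list \<Rightarrow> 'a set" where
  "Yof X r s = {y \<in> X. \<exists>t\<in>lists X. (s, y # t) \<in> word_eq X r}"

abbreviation rep :: "nat list \<Rightarrow> 'a list \<Rightarrow> 'a list" where
  "rep as ys \<equiv> concat (map2 replicate as ys)"

lemma step_lists:
  assumes "skew_type X r" "(u, v) \<in> one_step X r"
  shows "u \<in> lists X \<and> v \<in> lists X"
  using assms unfolding one_step_def skew_type_def by auto

lemma weq_lists:
  assumes "skew_type X r" "(u, v) \<in> word_eq X r" "u \<in> lists X"
  shows "v \<in> lists X"
  using assms(2,3) unfolding word_eq_def
  by (induct rule: rtrancl_induct) (auto dest: step_lists[OF assms(1)])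

lemma weq_len:
  assumes "(u, v) \<in> word_eq X r"
  shows "length u = length v"
  using assms unfolding word_eq_def one_step_def
  by (induct rule: rtrancl_induct) auto

lemma weq_refl: "(u, u) \<in> word_eq X r"
  unfolding word_eq_def by simp

lemma weq_sym: "(u, v) \<in> word_eq X r \<Longrightarrow> (v, u) \<in> word_eq X r"
  unfolding word_eq_def using sym_rtrancl[OF sym_Un_converse] by (metis symD)

lemma weq_trans: "(u, v) \<in> word_eq X r \<Longrightarrow> (v, w) \<in> word_eq X r \<Longrightarrow> (u, w) \<in> word_eq X r"
  unfolding word_eq_def by (rule rtrancl_trans)

lemma step_ctx:
  assumes "(u, v) \<in> one_step X r" "p \<in> lists X" "q \<in> lists X"
  shows "(p @ u @ q, p @ v @ q) \<in> one_step X r"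
proof -
  from assms(1) obtain u0 v0 a b where h: "u = u0 @ [a,b] @ v0" "v = u0 @ [fst (r (a,b)), snd (r (a,b))] @ v0"
    "u0 \<in> lists X" "v0 \<in> lists X" "a \<in> X" "b \<in> X" "a \<noteq> b"
    unfolding one_step_def by blast
  show ?thesis unfolding one_step_def
    apply (rule CollectI)
    apply (rule exI[of _ "p @ u0"], rule exI[of _ "v0 @ q"], rule exI[of _ a], rule exI[of _ b])
    using h assms by auto
qed

lemma weq_ctx:
  assumes "(u, v) \<in> word_eq X r" "p \<in> lists X" "q \<in> lists X"
  shows "(p @ u @ q, p @ v @ q) \<in> word_eq X r"
  using assms(1) unfolding word_eq_def
proof (induct rule: rtrancl_induct)
  case base
  then show ?case by simp
next
  case (step y z)
  then have "(p @ y @ q, p @ z @ q) \<in> one_step X r \<union> (one_step X r)\<inverse>"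
    using step_ctx[OF _ assms(2,3)] by blast
  with step show ?case by (meson rtrancl.rtrancl_into_rtrancl)
qed

lemma weq_cons:
  assumes "(u, v) \<in> word_eq X r" "x \<in> X"
  shows "(x # u, x # v) \<in> word_eq X r"
  using weq_ctx[OF assms(1), of "[x]" "[]"] assms(2) by simp

lemma weq_app:
  assumes "skew_type X r" "(u, u') \<in> word_eq X r" "(v, v') \<in> word_eq X r" "u \<in> lists X" "v \<in> lists X"
  shows "(u @ v, u' @ v') \<in> word_eq X r"
proof -
  have "u' \<in> lists X" using weq_lists assms by blast
  have "(u @ v, u' @ v) \<in> word_eq X r" using weq_ctx[OF assms(2), of "[]" v] assms by simp
  moreover have "(u' @ v, u' @ v') \<in> word_eq X r" using weq_ctx[OF assms(3), of u' "[]"] \<open>u' \<in> lists X\<close> by simp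
  ultimately show ?thesis by (rule weq_trans)
qed

lemma cls_eq: "cls X r u = cls X r v \<longleftrightarrow> (u, v) \<in> word_eq X r"
proof
  assume "cls X r u = cls X r v"
  then have "v \<in> cls X r u" unfolding cls_def using weq_refl by fastforce
  then show "(u, v) \<in> word_eq X r" unfolding cls_def by simp
next
  assume "(u, v) \<in> word_eq X r"
  then show "cls X r u = cls X r v" unfolding cls_def
    by (auto intro: weq_trans weq_sym)
qed

lemma sigma_inj:
  assumes "skew_type X r" "right_nondegenerate X r" "x \<in> X"
  shows "inj_on (\<lambda>y. fst (r (x, y))) X"
proof -
  have "finite X" using assms(1) unfolding skew_type_def by simp
  moreover have "(\<lambda>y. fst (r (x, y))) ` X = X" using assms(2,3) unfolding right_nondegenerate_def by blast
  ultimately show ?thesis using inj_on_iff_eq_card by metis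
qed

lemma Yof_sub: "Yof X r s \<subseteq> X" unfolding Yof_def by auto

lemma Yof_finite: "skew_type X r \<Longrightarrow> finite (Yof X r s)"
  using Yof_sub finite_subset unfolding skew_type_def by metis

lemma Yof_cong:
  assumes "(s, s') \<in> word_eq X r"
  shows "Yof X r s = Yof X r s'"
  unfolding Yof_def using assms weq_trans weq_sym by meson

lemma Yof_app:
  assumes "skew_type X r" "s \<in> lists X" "w \<in> lists X"
  shows "Yof X r s \<subseteq> Yof X r (s @ w)"
proof
  fix y assume "y \<in> Yof X r s"
  then obtain t where t: "y \<in> X" "t \<in> lists X" "(s, y # t) \<in> word_eq X r" unfolding Yof_def by blast
  have "(s @ w, (y # t) @ w) \<in> word_eq X r" using weq_ctx[OF t(3), of "[]" w] assms by simp
  then show "y \<in> Yof X r (s @ w)" unfolding Yof_def using t assms by (auto intro!: bexI[of _ "t @ w"])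
qed

lemma Yof_cons:
  assumes "skew_type X r" "x \<in> X" "s \<in> lists X" "z \<in> Yof X r s"
  shows "fst (r (x, z)) \<in> Yof X r (x # s)"
proof -
  obtain t where t: "z \<in> X" "t \<in> lists X" "(s, z # t) \<in> word_eq X r" using assms(4) unfolding Yof_def by blast
  have 1: "(x # s, x # z # t) \<in> word_eq X r" using weq_cons[OF t(3) assms(2)] .
  show ?thesis
  proof (cases "x = z")
    case True
    then have "r (x, z) = (x, x)" using assms(1,2) unfolding skew_type_def by auto
    then show ?thesis using 1 True t assms unfolding Yof_def by (auto intro!: bexI[of _ "z # t"])
  next
    case False
    have sk: "fst (r (x,z)) \<in> X" "snd (r (x,z)) \<in> X" using assms(1,2) t(1) False unfolding skew_type_def by auto
    have "([] @ [x,z] @ t, [] @ [fst (r (x,z)), snd (r (x,z))] @ t) \<in> one_step X r"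
      unfolding one_step_def using False t assms(2) by blast
    then have "(x # z # t, fst (r (x,z)) # snd (r (x,z)) # t) \<in> word_eq X r"
      unfolding word_eq_def by auto
    with 1 have "(x # s, fst (r (x,z)) # (snd (r (x,z)) # t)) \<in> word_eq X r" by (rule weq_trans)
    then show ?thesis unfolding Yof_def using sk t by (auto intro!: bexI[of _ "snd (r (x,z)) # t"])
  qed
qed


lemma Yof_self:
  assumes "x \<in> X" "s \<in> lists X"
  shows "x \<in> Yof X r (x # s)"
  unfolding Yof_def using assms weq_refl by blast

lemma Yof_card:
  assumes "skew_type X r" "right_nondegenerate X r" "x \<in> X" "s \<in> lists X"
  shows "card (Yof X r s) \<le> card (Yof X r (x # s))"
    and "x \<notin> Yof X r s \<Longrightarrow> card (Yof X r s) + 1 \<le> card (Yof X r (x # s))"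
proof -
  let ?f = "\<lambda>y. fst (r (x, y))"
  have inj: "inj_on ?f (Yof X r s)" using inj_on_subset[OF sigma_inj[OF assms(1-3)] Yof_sub] .
  have sub: "?f ` Yof X r s \<subseteq> Yof X r (x # s)" using Yof_cons[OF assms(1,3,4)] by blast
  have fin: "finite (Yof X r (x # s))" using Yof_finite[OF assms(1)] .
  have c: "card (?f ` Yof X r s) = card (Yof X r s)" using card_image[OF inj] .
  show "card (Yof X r s) \<le> card (Yof X r (x # s))"
    using card_mono[OF fin sub] c by simp
  assume nx: "x \<notin> Yof X r s"
  have "\<forall>a\<in>X. r (a, a) = (a, a)" using assms(1) unfolding skew_type_def by (elim conjE)
  then have "r (x, x) = (x, x)" using assms(3) by blast
  then have fx: "?f x = x" by simp
  have notin: "x \<notin> ?f ` Yof X r s"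
  proof
    assume "x \<in> ?f ` Yof X r s"
    then obtain z where z2: "x = ?f z" and z1: "z \<in> Yof X r s" by (rule imageE)
    have zX: "z \<in> X" by (rule subsetD[OF Yof_sub z1])
    have "?f z = ?f x" by (subst fx) (rule z2[symmetric])
    then have "z = x" by (rule inj_onD[OF sigma_inj[OF assms(1-3)] _ zX assms(3)])
    then have "x \<in> Yof X r s" using z1 by (rule subst)
    with nx show False by (rule notE)
  qed
  have subins: "insert x (?f ` Yof X r s) \<subseteq> Yof X r (x # s)" using sub Yof_self[OF assms(3,4)] by blast
  have finF: "finite (?f ` Yof X r s)" using finite_imageI[OF Yof_finite[OF assms(1)]] .
  have ins: "card (insert x (?f ` Yof X r s)) = card (?f ` Yof X r s) + 1" using finF notin by simp
  have "card (insert x (?f ` Yof X r s)) \<le> card (Yof X r (x # s))" by (rule card_mono[OF fin subins])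
  with ins have "card (?f ` Yof X r s) + 1 \<le> card (Yof X r (x # s))" by simp
  then show "card (Yof X r s) + 1 \<le> card (Yof X r (x # s))" using c by simp
qed

lemma rep_lemma:
  assumes sk: "skew_type X r" and rn: "right_nondegenerate X r"
  shows "w \<in> lists X \<Longrightarrow> \<exists>ys as. ys \<in> lists X \<and> length as = length ys \<and> length ys \<le> card (Yof X r w)
     \<and> (w, rep as ys) \<in> word_eq X r \<and> (w \<noteq> [] \<longrightarrow> ys \<noteq> [] \<and> hd ys = hd w)"
proof (induction w rule: length_induct)
  case (1 w)
  show ?case
  proof (cases w)
    case Nil
    then show ?thesis using weq_refl[of "[]" X r] by (intro exI[of _ "[]"]) auto
  next
    case (Cons y t)
    have y: "y \<in> X" and t: "t \<in> lists X" using 1(2) Cons by auto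
    show ?thesis
    proof (cases "y \<in> Yof X r t")
      case True
      then obtain t' where t': "t' \<in> lists X" "(t, y # t') \<in> word_eq X r" unfolding Yof_def by blast
      have "length (y # t') < length w" using weq_len[OF t'(2)] Cons by simp
      moreover have "y # t' \<in> lists X" using y t' by simp
      ultimately obtain ys as where IH: "ys \<in> lists X" "length as = length ys" "length ys \<le> card (Yof X r (y # t'))"
        "(y # t', rep as ys) \<in> word_eq X r" "ys \<noteq> []" "hd ys = y"
        using 1(1)[rule_format, of "y # t'"] by (metis list.distinct(1) list.sel(1))
      obtain ys' where ys: "ys = y # ys'" using IH(5,6) by (cases ys) auto
      obtain a as' where as: "as = a # as'" using IH(2) ys by (cases as) auto
      have e1: "(w, y # y # t') \<in> word_eq X r" using weq_cons[OF t'(2) y] Cons by simp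
      have "(y # y # t', y # rep as ys) \<in> word_eq X r" using weq_cons[OF IH(4) y] .
      moreover have "y # rep as ys = rep (Suc a # as') ys" using ys as by simp
      ultimately have e: "(w, rep (Suc a # as') ys) \<in> word_eq X r" using e1 weq_trans by metis
      have "card (Yof X r (y # t')) = card (Yof X r t)" using Yof_cong[OF t'(2)] by simp
      also have "\<dots> \<le> card (Yof X r w)" using Yof_card(1)[OF sk rn y t] Cons by simp
      finally show ?thesis using IH ys as e Cons by (intro exI[of _ ys] exI[of _ "Suc a # as'"]) auto
    next
      case False
      have "length t < length w" using Cons by simp
      then obtain ys as where IH: "ys \<in> lists X" "length as = length ys" "length ys \<le> card (Yof X r t)"
        "(t, rep as ys) \<in> word_eq X r"
        using 1(1)[rule_format, of t] t by blast
      have e: "(w, rep (1 # as) (y # ys)) \<in> word_eq X r" using weq_cons[OF IH(4) y] Cons by simp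
      have "length ys + 1 \<le> card (Yof X r w)" using Yof_card(2)[OF sk rn y t False] IH(3) Cons by simp
      then show ?thesis using IH e y Cons by (intro exI[of _ "y # ys"] exI[of _ "1 # as"]) auto
    qed
  qed
qed

lemma rep_lists: "ys \<in> lists X \<Longrightarrow> rep as ys \<in> lists X"
proof (induct as arbitrary: ys)
  case Nil
  then show ?case by simp
next
  case (Cons a as)
  then show ?case by (cases ys) auto
qed

lemma rep_len: "length as = length ys \<Longrightarrow> length (rep as ys) = sum_list as"
  by (induct as ys rule: list_induct2) auto


lemma cls_mon: "v \<in> lists X \<Longrightarrow> cls X r v \<in> mon X r"
  unfolding mon_def by blast

lemma lms_iff:
  assumes "skew_type X r" "v \<in> lists X"
  shows "cls X r v \<in> left_mult_set X r y \<longleftrightarrow> y \<in> Yof X r v"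
proof
  assume "cls X r v \<in> left_mult_set X r y"
  then have "\<exists>w. cls X r v = cls X r (y # w) \<and> w \<in> lists X"
    unfolding left_mult_set_def by (simp only: mem_Collect_eq)
  then obtain w where w1: "cls X r v = cls X r (y # w)" and w2: "w \<in> lists X" by (elim exE conjE)
  have e: "(v, y # w) \<in> word_eq X r" using w1 by (simp only: cls_eq)
  have "y # w \<in> lists X" using weq_lists[OF assms(1) e assms(2)] .
  then have yX: "y \<in> X" by simp
  have "\<exists>t\<in>lists X. (v, y # t) \<in> word_eq X r" using w2 e by (rule bexI[rotated])
  with yX show "y \<in> Yof X r v" unfolding Yof_def by (simp only: mem_Collect_eq)
next
  assume "y \<in> Yof X r v"
  then have "\<exists>t\<in>lists X. (v, y # t) \<in> word_eq X r" unfolding Yof_def by (simp only: mem_Collect_eq)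
  then obtain t where t1: "t \<in> lists X" and t2: "(v, y # t) \<in> word_eq X r" by (elim bexE)
  have eq: "cls X r v = cls X r (y # t)" using t2 by (simp only: cls_eq)
  have "\<exists>w. cls X r v = cls X r (y # w) \<and> w \<in> lists X" using eq t1 by (intro exI[of _ t] conjI)
  then show "cls X r v \<in> left_mult_set X r y"
    unfolding left_mult_set_def by (simp only: mem_Collect_eq)
qed

lemma S_sub_iff:
  assumes "skew_type X r" "v \<in> lists X"
  shows "cls X r v \<in> S_sub X r Y \<longleftrightarrow> Y \<subseteq> Yof X r v"
proof -
  have "cls X r v \<in> S_sub X r Y \<longleftrightarrow> (\<forall>y\<in>Y. cls X r v \<in> left_mult_set X r y)"
    unfolding S_sub_def using cls_mon[OF assms(2)] by (simp only: mem_Collect_eq simp_thms)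
  also have "\<dots> \<longleftrightarrow> (\<forall>y\<in>Y. y \<in> Yof X r v)" using lms_iff[OF assms] by (simp only:)
  also have "\<dots> \<longleftrightarrow> Y \<subseteq> Yof X r v" by (rule subset_eq[symmetric])
  finally show ?thesis .
qed

lemma Yof_prefix:
  assumes sk: "skew_type X r" and rn: "right_nondegenerate X r" and s: "s \<in> lists X"
  shows "u \<in> lists X \<Longrightarrow> Y \<subseteq> Yof X r s \<Longrightarrow> \<exists>Y'. Y' \<subseteq> Yof X r (u @ s) \<and> card Y' = card Y"
proof (induct u)
  case Nil
  then show ?case by (intro exI[of _ Y]) simp
next
  case (Cons x u)
  have x: "x \<in> X" and u: "u \<in> lists X" using Cons(2) by auto
  obtain Y' where Y': "Y' \<subseteq> Yof X r (u @ s)" "card Y' = card Y" using Cons(1)[OF u Cons(3)] by blast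
  have us: "u @ s \<in> lists X" using u s by simp
  let ?f = "\<lambda>y. fst (r (x, y))"
  have "Y' \<subseteq> X" using subset_trans[OF Y'(1) Yof_sub] .
  then have inj: "inj_on ?f Y'" using inj_on_subset[OF sigma_inj[OF sk rn x]] by blast
  have "?f ` Y' \<subseteq> Yof X r (x # u @ s)"
  proof (rule image_subsetI)
    fix z assume "z \<in> Y'"
    with Y'(1) have "z \<in> Yof X r (u @ s)" by (rule subsetD)
    then show "?f z \<in> Yof X r (x # u @ s)" by (rule Yof_cons[OF sk x us])
  qed
  moreover have "card (?f ` Y') = card Y" using card_image[OF inj] Y'(2) by simp
  ultimately show ?case unfolding append_Cons by (intro exI[of _ "?f ` Y'"]) simp
qed

lemma S_idx_mem:
  "s \<in> S_idx X r i \<longleftrightarrow> (\<exists>Y. Y \<subseteq> X \<and> card Y = i \<and> s \<in> S_sub X r Y)"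
  unfolding S_idx_def by blast

lemma ideal_part:
  assumes sk: "skew_type X r" and rn: "right_nondegenerate X r"
  shows "is_ideal X r (S_idx X r i)"
  unfolding is_ideal_def
proof (intro conjI ballI impI)
  show "S_idx X r i \<subseteq> mon X r" unfolding S_idx_def S_sub_def by blast
next
  fix u v w assume u: "u \<in> lists X" and v: "v \<in> lists X" and w: "w \<in> lists X"
    and c: "cls X r v \<in> S_idx X r i"
  from c obtain Y where Y1: "Y \<subseteq> X" and Y2: "card Y = i" and Y3: "cls X r v \<in> S_sub X r Y"
    unfolding S_idx_mem by (elim exE conjE)
  have "Y \<subseteq> Yof X r v" using Y3 S_sub_iff[OF sk v] by (simp only:)
  also have "\<dots> \<subseteq> Yof X r (v @ w)" using Yof_app[OF sk v w] .
  finally have YY: "Y \<subseteq> Yof X r (v @ w)" .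
  have vw: "v @ w \<in> lists X" using v w by simp
  from Yof_prefix[OF sk rn vw u YY] obtain Y' where Y'1: "Y' \<subseteq> Yof X r (u @ v @ w)"
    and Y'2: "card Y' = card Y" by (elim exE conjE)
  have uvw: "u @ v @ w \<in> lists X" using u v w by simp
  have m: "cls X r (u @ v @ w) \<in> S_sub X r Y'" using S_sub_iff[OF sk uvw] Y'1 by (simp only:)
  have "Y' \<subseteq> X" using subset_trans[OF Y'1 Yof_sub] .
  then have "\<exists>Y. Y \<subseteq> X \<and> card Y = i \<and> cls X r (u @ v @ w) \<in> S_sub X r Y"
    using m Y'2 Y2 by (intro exI[of _ Y'] conjI) simp_all
  then show "cls X r (u @ v @ w) \<in> S_idx X r i" unfolding S_idx_mem .
qed

lemma S_sub_anti: "Y' \<subseteq> Y \<Longrightarrow> S_sub X r Y \<subseteq> S_sub X r Y'"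
  unfolding S_sub_def by blast

lemma chain_part:
  assumes "finite X"
  shows "S_idx X r (i + 1) \<subseteq> S_idx X r i"
proof
  fix s assume "s \<in> S_idx X r (i + 1)"
  then obtain Y where Y: "Y \<subseteq> X" "card Y = i + 1" "s \<in> S_sub X r Y" unfolding S_idx_def by blast
  obtain Y' where Y': "Y' \<subseteq> Y" "card Y' = i" using obtain_subset_with_card_n[of i Y] Y(2) by auto
  have "s \<in> S_sub X r Y'" using S_sub_anti[OF Y'(1)] Y(3) by blast
  then show "s \<in> S_idx X r i" unfolding S_idx_def using Y Y' by blast
qed

lemma top_part:
  assumes "finite X"
  shows "S_sub X r X = S_idx X r (card X)"
proof
  show "S_sub X r X \<subseteq> S_idx X r (card X)" unfolding S_idx_def by blast
next
  show "S_idx X r (card X) \<subseteq> S_sub X r X"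
  proof
    fix s assume "s \<in> S_idx X r (card X)"
    then obtain Y where Y: "Y \<subseteq> X" "card Y = card X" "s \<in> S_sub X r Y" unfolding S_idx_def by blast
    then have "Y = X" using card_subset_eq[OF assms] by blast
    then show "s \<in> S_sub X r X" using Y by simp
  qed
qed

lemma mon_part:
  assumes sk: "skew_type X r" and rn: "right_nondegenerate X r" and n: "n = card X"
  shows "mon X r = \<Union> {power_set_prod X r ys | ys. ys \<in> lists X \<and> length ys \<le> n}"
proof
  show "mon X r \<subseteq> \<Union> {power_set_prod X r ys | ys. ys \<in> lists X \<and> length ys \<le> n}"
  proof
    fix s assume "s \<in> mon X r"
    then obtain w where w2: "s = cls X r w" and w1: "w \<in> lists X" unfolding mon_def by (rule imageE)
    note w = w1 w2
    then obtain ys as where R: "ys \<in> lists X" "length as = length ys" "length ys \<le> card (Yof X r w)"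
      "(w, rep as ys) \<in> word_eq X r" using rep_lemma[OF sk rn w(1)] by blast
    have fin: "finite X" using sk unfolding skew_type_def by (elim conjE)
    have "card (Yof X r w) \<le> n" using n card_mono[OF fin Yof_sub] by simp
    then have le: "length ys \<le> n" using R(3) by simp
    have sd: "s = cls X r (rep as ys)" using R(4) w(2) cls_eq by metis
    have mem: "s \<in> power_set_prod X r ys" unfolding power_set_prod_def sd
      using R(2) by blast
    show "s \<in> \<Union> {power_set_prod X r ys | ys. ys \<in> lists X \<and> length ys \<le> n}"
      using R(1) le mem by blast
  qed
next
  show "\<Union> {power_set_prod X r ys | ys. ys \<in> lists X \<and> length ys \<le> n} \<subseteq> mon X r"
  proof
    fix s assume "s \<in> \<Union> {power_set_prod X r ys | ys. ys \<in> lists X \<and> length ys \<le> n}"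
    then obtain ys as where ys: "ys \<in> lists X" and sd: "s = cls X r (rep as ys)"
      unfolding power_set_prod_def by blast
    have "rep as ys \<in> lists X" using ys by (rule rep_lists)
    then show "s \<in> mon X r" unfolding sd by (rule cls_mon)
  qed
qed

lemma sum_pow_bound: "(\<Sum>i\<le>n. (Suc d) ^ i) \<le> (n + 1) * (Suc d) ^ n"
proof -
  have "(\<Sum>i\<le>n. (Suc d) ^ i) \<le> (\<Sum>i\<le>n. (Suc d) ^ n)"
    by (rule sum_mono) (simp add: power_increasing)
  also have "\<dots> = (n + 1) * (Suc d) ^ n" by simp
  finally show ?thesis .
qed

lemma growth_bound:
  assumes sk: "skew_type X r" and rn: "right_nondegenerate X r" and n: "n = card X"
  shows "\<exists>K::nat. K \<ge> 1 \<and> (\<forall>d. 1 \<le> growth X r d \<and> growth X r d \<le> K * (Suc d) ^ n)"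
proof -
  have fin: "finite X" using sk unfolding skew_type_def by (elim conjE)
  define L where "L = {ys. set ys \<subseteq> X \<and> length ys \<le> n}"
  have finL: "finite L" unfolding L_def using finite_lists_length_le[OF fin] .
  have "[] \<in> L" unfolding L_def by simp
  then have L1: "card L \<ge> 1" using finL by (metis One_nat_def Suc_leI card_gt_0_iff empty_iff)
  define K where "K = (n + 1) * card L"
  have K1: "K \<ge> 1" unfolding K_def using L1 by simp
  have "1 \<le> growth X r d \<and> growth X r d \<le> K * (Suc d) ^ n" for d
  proof -
    define A where "A = {as. set as \<subseteq> {..d} \<and> length as \<le> n}"
    have finA: "finite A" unfolding A_def using finite_lists_length_le[of "{..d}"] by simp
    have cA: "card A = (\<Sum>i\<le>n. (Suc d) ^ i)" unfolding A_def
      using card_lists_length_le[of "{..d}" n] by simp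
    define G where "G = {cls X r w | w. w \<in> lists X \<and> length w \<le> d}"
    define F where "F = (\<lambda>p. cls X r (rep (fst p) (snd p)))"
    have sub: "G \<subseteq> F ` (A \<times> L)"
    proof
      fix g assume "g \<in> G"
      then obtain w where gw: "g = cls X r w" and w: "w \<in> lists X" and wd: "length w \<le> d"
        unfolding G_def by blast
      obtain ys as where R: "ys \<in> lists X" "length as = length ys" "length ys \<le> card (Yof X r w)"
        "(w, rep as ys) \<in> word_eq X r" using rep_lemma[OF sk rn w] by blast
      have "card (Yof X r w) \<le> n" using n card_mono[OF fin Yof_sub] by simp
      then have le: "length ys \<le> n" using R(3) by simp
      have "sum_list as = length w" using rep_len[OF R(2)] weq_len[OF R(4)] by simp
      then have "\<forall>a\<in>set as. a \<le> d" using wd member_le_sum_list by fastforce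
      then have "as \<in> A" unfolding A_def using le R(2) by auto
      moreover have "ys \<in> L" unfolding L_def using le R(1) by auto
      moreover have "g = F (as, ys)" unfolding F_def gw using cls_eq[THEN iffD2, OF R(4)] by simp
      ultimately show "g \<in> F ` (A \<times> L)" by blast
    qed
    have finG: "finite G" using finite_subset[OF sub] finA finL by blast
    have "card G \<le> card (A \<times> L)" using card_image_le[of "A \<times> L" F] finA finL card_mono[OF _ sub] by fastforce
    also have "\<dots> = card A * card L" by (rule card_cartesian_product)
    also have "\<dots> \<le> (n + 1) * (Suc d) ^ n * card L" using cA sum_pow_bound[of d n] by (simp add: mult_right_mono)
    also have "\<dots> = K * (Suc d) ^ n" unfolding K_def by (simp only: mult.commute mult.left_commute)
    finally have up: "card G \<le> K * (Suc d) ^ n" .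
    have "cls X r [] \<in> G" unfolding G_def by auto
    then have "card G \<ge> 1" using finG by (metis One_nat_def Suc_leI card_gt_0_iff empty_iff)
    then show ?thesis using up unfolding growth_def G_def by simp
  qed
  then show ?thesis using K1 by blast
qed

lemma GK_part:
  assumes sk: "skew_type X r" and rn: "right_nondegenerate X r" and n: "n = card X"
  shows "GK_monoid_algebra X r \<le> ereal (real n)"
proof -
  obtain K :: nat where K1: "K \<ge> 1" and KB: "\<And>d. 1 \<le> growth X r d \<and> growth X r d \<le> K * (Suc d) ^ n"
    using growth_bound[OF assms] by blast
  define C where "C = ln (real K) + real n * ln 2"
  define f where "f = (\<lambda>d::nat. ln (real (growth X r d)) / ln (real d))"
  define g where "g = (\<lambda>d::nat. C / ln (real d) + real n)"
  have le: "f d \<le> g d" if d2: "d \<ge> 2" for d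
  proof -
    have lnd: "ln (real d) > 0" using d2 by simp
    have g1: "real (growth X r d) \<ge> 1" using KB[of d] by simp
    have "real (growth X r d) \<le> real K * (real d + 1) ^ n"
      using KB[of d] by (metis of_nat_Suc of_nat_le_iff of_nat_mult of_nat_power add.commute)
    then have "ln (real (growth X r d)) \<le> ln (real K * (real d + 1) ^ n)"
      using g1 by (subst ln_le_cancel_iff) auto
    also have "\<dots> = ln (real K) + real n * ln (real d + 1)"
      using K1 by (simp add: ln_mult ln_realpow)
    also have "ln (real d + 1) \<le> ln 2 + ln (real d)"
    proof -
      have "ln (real d + 1) \<le> ln (2 * real d)" using d2 by (subst ln_le_cancel_iff) auto
      also have "\<dots> = ln 2 + ln (real d)" using d2 by (simp add: ln_mult)
      finally show ?thesis .
    qed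
    then have "ln (real K) + real n * ln (real d + 1) \<le> ln (real K) + real n * (ln 2 + ln (real d))"
      by (simp add: mult_left_mono)
    finally have "ln (real (growth X r d)) \<le> C + real n * ln (real d)"
      unfolding C_def by (simp add: algebra_simps)
    then have "f d \<le> (C + real n * ln (real d)) / ln (real d)"
      unfolding f_def using lnd by (simp add: divide_right_mono)
    also have "\<dots> = g d" unfolding g_def using lnd by (simp add: add_divide_distrib)
    finally show ?thesis .
  qed
  have lim: "g \<longlonglongrightarrow> real n"
  proof -
    have "filterlim (\<lambda>d::nat. ln (real d)) at_top sequentially"
      by (rule filterlim_compose[OF ln_at_top filterlim_real_sequentially])
    then have "((\<lambda>d::nat. C / ln (real d)) \<longlongrightarrow> 0) sequentially"
      by (intro tendsto_divide_0[OF tendsto_const] filterlim_at_top_imp_at_infinity)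
    then have "((\<lambda>d::nat. C / ln (real d) + real n) \<longlongrightarrow> 0 + real n) sequentially"
      by (intro tendsto_add tendsto_const)
    then show ?thesis unfolding g_def by simp
  qed
  have "GK_monoid_algebra X r = limsup (\<lambda>d. ereal (f d))" unfolding GK_monoid_algebra_def f_def ..
  also have "\<dots> \<le> limsup (\<lambda>d. ereal (g d))"
    by (rule Limsup_mono) (use le in \<open>auto simp: eventually_sequentially intro!: exI[of _ 2]\<close>)
  also have "\<dots> = ereal (real n)"
    by (rule lim_imp_Limsup) (simp_all add: lim)
  finally show ?thesis .
qed

theorem theorem4p1:
  fixes X :: "'a set" and r :: "'a \<times> 'a \<Rightarrow> 'a \<times> 'a" and n :: nat
  assumes "skew_type X r" and "right_nondegenerate X r" and "n = card X"
  shows "(\<forall>i. 1 \<le> i \<and> i \<le> n \<longrightarrow> is_ideal X r (S_idx X r i))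
    \<and> S_sub X r X = S_idx X r n
    \<and> (\<forall>i. 1 \<le> i \<and> i < n \<longrightarrow> S_idx X r (i + 1) \<subseteq> S_idx X r i)
    \<and> S_idx X r 1 \<subseteq> mon X r
    \<and> mon X r = \<Union> {power_set_prod X r ys | ys. ys \<in> lists X \<and> length ys \<le> n}
    \<and> GK_monoid_algebra X r \<le> ereal (real n)"
proof (intro conjI allI impI)
  have fin: "finite X" using assms(1) unfolding skew_type_def by (elim conjE)
  show "is_ideal X r (S_idx X r i)" for i using ideal_part[OF assms(1,2)] .
  show "S_sub X r X = S_idx X r n" using top_part[OF fin] assms(3) by simp
  show "S_idx X r (i + 1) \<subseteq> S_idx X r i" for i using chain_part[OF fin] .
  show "S_idx X r 1 \<subseteq> mon X r" unfolding S_idx_def S_sub_def by blast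
  show "mon X r = \<Union> {power_set_prod X r ys | ys. ys \<in> lists X \<and> length ys \<le> n}"
    using mon_part[OF assms] .
  show "GK_monoid_algebra X r \<le> ereal (real n)" using GK_part[OF assms] .
qed

end
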